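(* Let $f$ be the morphism on $\{0,1\}$ given by $f(0)=10$, $f(1)=0101$, so that $f^2(0)=010110$ and $f^2(1)=100101100101$. The infinite fixed point of $f^2$ beginning with $0$ is $3$-automatic.
   Context: For an integer $q\ge 2$, a sequence is $q$-automatic if it is the image under a letter-to-letter map of a fixed point of a morphism all of whose letter-images have length $q$. *)

theory Defs
  imports Main
begin

definition morph_word :: "('a \<Rightarrow> 'a list) \<Rightarrow> 'a list \<Rightarrow> 'a list" where
  "morph_word g u = concat (map g u)"

text \<open>An infinite word x :: nat => 'a is a fixed point of g if g(x) = x, i.e.
  for every n the image of the length-n prefix of x is a prefix of x.\<close>
definition is_fixed_point :: "('a \<Rightarrow> 'a list) \<Rightarrow> (nat \<Rightarrow> 'a) \<Rightarrow> bool" where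
  "is_fixed_point g x \<longleftrightarrow>
     (\<forall>n. \<forall>i < length (morph_word g (map x [0..<n])).
        x i = morph_word g (map x [0..<n]) ! i)"

text \<open>q-automatic: image under a letter-to-letter map of a fixed point of a
  q-uniform morphism on a finite alphabet (alphabet encoded as a finite set of naturals).\<close>
definition q_automatic :: "nat \<Rightarrow> (nat \<Rightarrow> 'b) \<Rightarrow> bool" where
  "q_automatic q s \<longleftrightarrow>
     (\<exists>(A :: nat set) (\<phi> :: nat \<Rightarrow> nat list) (w :: nat \<Rightarrow> nat) (\<tau> :: nat \<Rightarrow> 'b).
        finite A \<and>
        (\<forall>a\<in>A. length (\<phi> a) = q \<and> set (\<phi> a) \<subseteq> A) \<and>
        (\<forall>n. w n \<in> A) \<and>
        is_fixed_point \<phi> w \<and>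
        (\<forall>n. s n = \<tau> (w n)))"

definition f_morph :: "nat \<Rightarrow> nat list" where
  "f_morph a = (if a = 0 then [1,0] else [0,1,0,1])"

definition f2_morph :: "nat \<Rightarrow> nat list" where
  "f2_morph a = morph_word f_morph (f_morph a)"

end

theory Submission
  imports Defs
begin

lemma morph_uniform:
  assumes "\<And>a. length (g a) = q"
  shows "length (morph_word g u) = q * length u \<and>
         (\<forall>i < q * length u. morph_word g u ! i = g (u ! (i div q)) ! (i mod q))"
proof (induction u rule: rev_induct)
  case Nil
  then show ?case by (simp add: morph_word_def)
next
  case (snoc a u)
  have L: "length (morph_word g u) = q * length u" using snoc by blast
  have M: "morph_word g (u @ [a]) = morph_word g u @ g a" by (simp add: morph_word_def)
  show ?case
  proof (intro conjI allI impI)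
    show "length (morph_word g (u @ [a])) = q * length (u @ [a])"
      using L M assms by simp
  next
    fix i assume i: "i < q * length (u @ [a])"
    show "morph_word g (u @ [a]) ! i = g ((u @ [a]) ! (i div q)) ! (i mod q)"
    proof (cases "i < q * length u")
      case True
      then have "i div q < length u"
        by (metis less_mult_imp_div_less mult.commute)
      then show ?thesis using True snoc L M by (simp add: nth_append)
    next
      case False
      then have qp: "q > 0" using i by (cases q) auto
      have "i div q = length u"
        using False i qp by (simp add: div_nat_eqI mult.commute)
      moreover have "i - q * length u = i mod q"
        using \<open>i div q = length u\<close> by (metis minus_div_mult_eq_mod mult.commute)
      ultimately show ?thesis using False L M by (simp add: nth_append)
    qed
  qed
qed

definition psi :: "nat \<Rightarrow> nat list" where
  "psi a = (if a = 0 then [0,1,1,0,1,1,1,1,0] else [1,1,0,0,1,1,0,1,1])"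
definition Bm :: "nat \<Rightarrow> nat list" where
  "Bm a = (if a = 0 then [0,1,0,1,1,0] else [1,0,0,1,0,1])"
definition hm :: "nat \<Rightarrow> nat list" where
  "hm a = (if a = 0 then [0] else [1,1])"

fun y :: "nat \<Rightarrow> nat" where
  "y n = (if n = 0 then 0 else psi (y (n div 9)) ! (n mod 9))"

declare y.simps[simp del]

lemma y0: "y 0 = 0" by (simp add: y.simps)

lemma y_rec: assumes "j < 9" shows "y (9*k+j) = psi (y k) ! j"
proof (cases "9*k+j = 0")
  case True
  then have "k = 0" "j = 0" by auto
  then show ?thesis by (simp add: y.simps psi_def)
next
  case False then show ?thesis using assms by (subst y.simps) (simp add: y0 psi_def)
qed

lemma psi_le: "k < 9 \<Longrightarrow> psi a ! k \<le> 1"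
  unfolding psi_def by (auto simp: less_Suc_eq nth_Cons split: nat.splits)

lemma y_le: "y n \<le> 1"
proof (cases "n = 0")
  case True then show ?thesis by (simp add: y0)
next
  case False
  then have "y n = psi (y (n div 9)) ! (n mod 9)" by (subst y.simps) simp
  then show ?thesis using psi_le[of "n mod 9" "y (n div 9)"] by simp
qed

definition X :: "nat \<Rightarrow> nat" where
  "X n = Bm (y (n div 6)) ! (n mod 6)"

lemma morph_append: "morph_word g (u @ v) = morph_word g u @ morph_word g v"
  by (simp add: morph_word_def)

lemma morph_comp: "morph_word g (morph_word h u) = morph_word (\<lambda>a. morph_word g (h a)) u"
  by (induction u) (auto simp: morph_word_def)

lemma morph_cong: "(\<And>a. a \<in> set u \<Longrightarrow> g a = h a) \<Longrightarrow> morph_word g u = morph_word h u"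
  by (induction u) (auto simp: morph_word_def)

lemma f2_eq: "f2_morph a = morph_word Bm (hm a)"
  by (simp add: f2_morph_def f_morph_def morph_word_def Bm_def hm_def)

lemma hB_eq: "morph_word hm (Bm a) = psi a"
  by (simp add: morph_word_def Bm_def hm_def psi_def)

lemma lenBm: "length (Bm a) = 6" by (simp add: Bm_def)
lemma lenpsi: "length (psi a) = 9" by (simp add: psi_def)

lemma L2: "map X [0..<6*m] = morph_word Bm (map y [0..<m])"
proof -
  have U: "length (morph_word Bm (map y [0..<m])) = 6 * m \<and>
         (\<forall>i < 6 * m. morph_word Bm (map y [0..<m]) ! i = Bm (map y [0..<m] ! (i div 6)) ! (i mod 6))"
    using morph_uniform[of Bm 6 "map y [0..<m]"] lenBm by simp
  show ?thesis
  proof (rule nth_equalityI)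
    show "length (map X [0..<6 * m]) = length (morph_word Bm (map y [0..<m]))" using U by simp
    fix i assume "i < length (map X [0..<6 * m])"
    then have i: "i < 6*m" by simp
    then have "i div 6 < m" by simp
    then show "map X [0..<6 * m] ! i = morph_word Bm (map y [0..<m]) ! i"
      using U i by (simp add: X_def)
  qed
qed

lemma L4: "morph_word psi (map y [0..<m]) = map y [0..<9*m]"
proof -
  have U: "length (morph_word psi (map y [0..<m])) = 9 * m \<and>
         (\<forall>i < 9 * m. morph_word psi (map y [0..<m]) ! i = psi (map y [0..<m] ! (i div 9)) ! (i mod 9))"
    using morph_uniform[of psi 9 "map y [0..<m]"] lenpsi by simp
  show ?thesis
  proof (rule nth_equalityI)
    show "length (morph_word psi (map y [0..<m])) = length (map y [0..<9 * m])" using U by simp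
    fix i assume "i < length (morph_word psi (map y [0..<m]))"
    then have i: "i < 9*m" using U by simp
    then have "i div 9 < m" by simp
    moreover have "y i = psi (y (i div 9)) ! (i mod 9)"
      using y_rec[of "i mod 9" "i div 9"] by simp
    ultimately show "morph_word psi (map y [0..<m]) ! i = map y [0..<9 * m] ! i"
      using U i by simp
  qed
qed

lemma L5: "morph_word f2_morph (map X [0..<6*m]) = map X [0..<54*m]"
proof -
  have "morph_word f2_morph (map X [0..<6*m]) = morph_word Bm (morph_word hm (map X [0..<6*m]))"
    by (simp add: morph_comp f2_eq[abs_def])
  also have "\<dots> = morph_word Bm (morph_word psi (map y [0..<m]))"
    by (simp add: L2 morph_comp hB_eq)
  also have "\<dots> = morph_word Bm (map y [0..<9*m])" by (simp add: L4)
  also have "\<dots> = map X [0..<54*m]" using L2[of "9*m"] by simp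
  finally show ?thesis .
qed

lemma X_fixed: "is_fixed_point f2_morph X"
  unfolding is_fixed_point_def
proof (intro allI impI)
  fix n i assume i: "i < length (morph_word f2_morph (map X [0..<n]))"
  have "[0..<6*n] = [0..<n] @ [n..<6*n]" using upt_add_eq_append[of 0 n "5*n"] by simp
  then have "morph_word f2_morph (map X [0..<6*n]) =
        morph_word f2_morph (map X [0..<n]) @ morph_word f2_morph (map X [n..<6*n])"
    by (simp add: morph_append)
  then have "map X [0..<54*n] = morph_word f2_morph (map X [0..<n]) @ morph_word f2_morph (map X [n..<6*n])"
    by (simp add: L5)
  then have "map X [0..<54*n] ! i = morph_word f2_morph (map X [0..<n]) ! i"
    using i by (simp add: nth_append)
  moreover have "i < 54 * n"
    using i \<open>map X [0..<54*n] = _\<close> by (metis length_append length_map length_upt minus_nat.diff_0 trans_less_add1)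
  ultimately show "X i = morph_word f2_morph (map X [0..<n]) ! i" by simp
qed

lemma X0: "X 0 = 0" by (simp add: X_def y.simps Bm_def)

lemma len_f2: "length (f2_morph a) \<ge> 6"
  by (simp add: f2_morph_def f_morph_def morph_word_def)

lemma len_morph_f2: "length (morph_word f2_morph u) \<ge> 6 * length u"
  by (induction u) (auto simp: morph_word_def intro: add_mono[OF len_f2, simplified])

lemma uniq:
  assumes "x 0 = 0" "is_fixed_point f2_morph x"
  shows "x n = X n"
proof (induction n rule: less_induct)
  case (less n)
  show ?case
  proof (cases "n = 0")
    case True then show ?thesis using assms X0 by simp
  next
    case False
    have eq: "map x [0..<n] = map X [0..<n]" using less by simp
    have "6 * n \<le> length (morph_word f2_morph (map x [0..<n]))"
      using len_morph_f2[of "map x [0..<n]"] by simp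
    then have lt: "n < length (morph_word f2_morph (map x [0..<n]))" using False by linarith
    have "x n = morph_word f2_morph (map x [0..<n]) ! n"
      using assms(2) lt unfolding is_fixed_point_def by blast
    moreover have "X n = morph_word f2_morph (map X [0..<n]) ! n"
      using X_fixed lt eq unfolding is_fixed_point_def by simp
    ultimately show ?thesis using eq by simp
  qed
qed

lemma arith6: assumes "c < (6::nat)" "r < 3"
  shows "(3*c+r) div 2 = 3*(c div 2) + (3*(c mod 2)+r) div 2 \<and> 3*(c div 2) + (3*(c mod 2)+r) div 2 < 9
     \<and> (3*c+r) div 6 = c div 2 \<and> (3*c+r) mod 6 = 3*(c mod 2) + r"
proof -
  have "c = 0 \<or> c = 1 \<or> c = 2 \<or> c = 3 \<or> c = 4 \<or> c = 5" using assms by auto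
  moreover have "r = 0 \<or> r = 1 \<or> r = 2" using assms by auto
  ultimately show ?thesis by auto
qed

definition delta :: "nat \<Rightarrow> nat \<Rightarrow> nat" where
  "delta s r = (psi ((s div 6) mod 2) ! (3*((s mod 6) div 2) + (3*((s mod 6) mod 2) + r) div 2)) * 12
       + (s div 12) * 6 + (3*((s mod 6) mod 2) + r)"

definition W :: "nat \<Rightarrow> nat" where
  "W n = y (n div 2) * 12 + y (n div 6) * 6 + n mod 6"

definition phi :: "nat \<Rightarrow> nat list" where
  "phi s = [delta s 0, delta s 1, delta s 2]"

definition tau :: "nat \<Rightarrow> nat" where
  "tau s = Bm ((s div 6) mod 2) ! (s mod 6)"

lemma W_dec: "W n div 12 = y (n div 2)" "(W n div 6) mod 2 = y (n div 6)" "W n mod 6 = n mod 6"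
proof -
  define a where "a = y (n div 2)"
  define b where "b = y (n div 6)"
  define c where "c = n mod 6"
  have a: "a \<le> 1" "b \<le> 1" unfolding a_def b_def by (rule y_le)+
  have c: "c < 6" unfolding c_def by simp
  have W: "W n = c + (2*a+b) * 6" unfolding W_def a_def b_def c_def by simp
  have d6: "W n div 6 = 2*a+b" using W c by simp
  have "(2*a+b) mod 2 = b" using a(2) by (cases b) auto
  then show "(W n div 6) mod 2 = y (n div 6)" using d6 unfolding b_def by simp
  have "W n mod 6 = c mod 6" unfolding W by (rule mod_mult_self1)
  then show "W n mod 6 = n mod 6" using c unfolding c_def by simp
  have "(2*a+b) div 2 = a" using a(2) by (cases b) auto
  moreover have "W n div 12 = (W n div 6) div 2" by (simp add: div_mult2_eq[symmetric])
  ultimately show "W n div 12 = y (n div 2)" using d6 unfolding a_def by simp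
qed

lemma W_rec:
  assumes r: "r < 3" shows "W (3*n+r) = delta (W n) r"
proof -
  define q where "q = n div 6"
  define c where "c = n mod 6"
  have c6: "c < 6" by (simp add: c_def)
  note A = arith6[OF c6 r]
  have k: "3*(c div 2) + (3*(c mod 2) + r) div 2 < 9" using A by blast
  have n: "n = c + q * 6" unfolding c_def q_def by simp
  have "3*n+r = (3*c+r) + (9*q) * 2" using n by simp
  then have "(3*n+r) div 2 = 9*q + (3*c+r) div 2" by simp
  then have e1: "(3*n+r) div 2 = 9*q + (3*(c div 2) + (3*(c mod 2) + r) div 2)"
    using A by simp
  have eq: "3*n+r = (3*c+r) + (3*q) * 6" using n by simp
  have "(3*n+r) div 6 = 3*q + (3*c+r) div 6" unfolding eq by (rule div_mult_self1) simp
  moreover have "(3*n+r) mod 6 = (3*c+r) mod 6" unfolding eq by (rule mod_mult_self1)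
  ultimately have "(3*n+r) div 6 = 3*q + (3*c+r) div 6" "(3*n+r) mod 6 = (3*c+r) mod 6" by simp_all
  then have e2: "(3*n+r) div 6 = 3*q + c div 2" and e3: "(3*n+r) mod 6 = 3*(c mod 2) + r"
    using A by simp_all
  have nd2: "n div 2 = 3*q + c div 2"
  proof -
    have "n = c + (3*q)*2" using n by simp
    then show ?thesis by simp
  qed
  have "y ((3*n+r) div 2) = psi (y q) ! (3*(c div 2) + (3*(c mod 2) + r) div 2)"
    using e1 y_rec[OF k] by simp
  then show ?thesis
    unfolding delta_def W_dec using e2 e3 nd2 by (simp add: W_def c_def[symmetric] q_def[symmetric])
qed

lemma delta_lt: assumes "s < 24" "r < 3" shows "delta s r < 24"
proof -
  have "3*((s mod 6) div 2) + (3*((s mod 6) mod 2) + r) div 2 < 9" using arith6[of "s mod 6" r] assms by simp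
  then have p: "psi ((s div 6) mod 2) ! (3*((s mod 6) div 2) + (3*((s mod 6) mod 2) + r) div 2) \<le> 1"
    by (rule psi_le)
  have "s div 12 \<le> 1" using assms by linarith
  moreover have "3*((s mod 6) mod 2) + r \<le> 5" using assms by linarith
  ultimately show ?thesis using p unfolding delta_def by linarith
qed

lemma W_lt: "W n < 24"
  using y_le[of "n div 2"] y_le[of "n div 6"] unfolding W_def by linarith

lemma X_W: "X n = tau (W n)"
  unfolding tau_def W_dec X_def by simp

lemma W_fixed: "is_fixed_point phi W"
  unfolding is_fixed_point_def
proof (intro allI impI)
  fix n i assume i: "i < length (morph_word phi (map W [0..<n]))"
  have U: "length (morph_word phi (map W [0..<n])) = 3 * n \<and>
         (\<forall>i < 3 * n. morph_word phi (map W [0..<n]) ! i = phi (map W [0..<n] ! (i div 3)) ! (i mod 3))"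
    using morph_uniform[of phi 3 "map W [0..<n]"] by (simp add: phi_def)
  then have i3: "i < 3*n" using i by simp
  then have "i div 3 < n" by simp
  then have "morph_word phi (map W [0..<n]) ! i = phi (W (i div 3)) ! (i mod 3)"
    using U i3 by simp
  also have "\<dots> = delta (W (i div 3)) (i mod 3)"
  proof -
    have "i mod 3 = 0 \<or> i mod 3 = 1 \<or> i mod 3 = 2" by linarith
    then show ?thesis unfolding phi_def by auto
  qed
  also have "\<dots> = W (3 * (i div 3) + i mod 3)" by (rule W_rec[symmetric]) simp
  also have "\<dots> = W i" by simp
  finally show "W i = morph_word phi (map W [0..<n]) ! i" by simp
qed

lemma X_auto: "q_automatic 3 X"
  unfolding q_automatic_def
proof (intro exI conjI)
  show "finite {0..<24::nat}" by simp
  show "\<forall>a\<in>{0..<24}. length (phi a) = 3 \<and> set (phi a) \<subseteq> {0..<24}"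
    by (auto simp: phi_def delta_lt)
  show "\<forall>n. W n \<in> {0..<24}" using W_lt by simp
  show "is_fixed_point phi W" by (rule W_fixed)
  show "\<forall>n. X n = tau (W n)" by (simp add: X_W)
qed

theorem mainTheorem6:
  shows "(\<exists>x :: nat \<Rightarrow> nat. x 0 = 0 \<and> is_fixed_point f2_morph x) \<and>
         (\<forall>x :: nat \<Rightarrow> nat. x 0 = 0 \<and> is_fixed_point f2_morph x \<longrightarrow> q_automatic 3 x)"
proof
  show "\<exists>x :: nat \<Rightarrow> nat. x 0 = 0 \<and> is_fixed_point f2_morph x"
    using X0 X_fixed by blast
  show "\<forall>x :: nat \<Rightarrow> nat. x 0 = 0 \<and> is_fixed_point f2_morph x \<longrightarrow> q_automatic 3 x"
  proof (intro allI impI)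
    fix x :: "nat \<Rightarrow> nat" assume "x 0 = 0 \<and> is_fixed_point f2_morph x"
    then have "x = X" using uniq by blast
    then show "q_automatic 3 x" using X_auto by simp
  qed
qed

end
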